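(* Let $M_0$ be a smooth spacelike entire graph over $\mathbb{R}^n$ in $\mathbb{R}^{n,m}$ with $\sup_{M_0}v^2\le C_v$ and $\sup_{M_0}\|H\|^2<C_H$, and let $M_t$ be a tame solution of entire graphical spacelike mean curvature flow starting at $M_0$. Then every expanding quasi-sphere acts as an outer barrier: for any $p\in\mathbb{R}^{n,m}$ and $R>0$, if $M_0\subset I_0$ then $M_t\subset I_t$ for all $t\ge0$, where $I_t=\{x\in\mathbb{R}^{n,m}:|p-x|^2\ge-R^2-2nt\}$.
   Context: $\mathbb{R}^{n,m}$ has quadratic form $\langle x,y\rangle=\sum_{i\le n}x^iy^i-\sum_{A\le m}x^{n+A}y^{n+A}$, $|x|^2=\langle x,x\rangle$ (possibly negative), timelike basis $e_1,\dots,e_m$. Entire graphical spacelike MCF: $M_t$ graph of $\hat u(\cdot,t)$ with $\partial_t\hat u-g^{ij}(D\hat u)D^2_{ij}\hat u=0$, $g_{ij}=\delta_{ij}-\sum_AD_i\hat u^AD_j\hat u^A$ positive definite. For normal vectors $z$, $\|z\|^2=-|z|^2$; $H$ the mean curvature vector; $v^2=\sum_A\|e_A^\perp\|^2$. Tame: there is a continuous $f$ on $[0,\infty)$ with $f(0)=C_H$ and $\sup_{M_t}\|H\|^2\le f(t)$. The set $S_t=\{|p-x|^2=-R^2-2nt\}$ is the quasi-sphere expander, $I_t$ its inside. *)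

theory Defs
  imports "HOL-Analysis.Analysis"
begin

text \<open>Points of the pseudo-Euclidean space R^{n,m} are pairs (x, y) with x in R^n
(spacelike directions) and y in R^m (timelike directions e_1..e_m).\<close>

type_synonym ('n, 'm) pspace = "(real^'n) \<times> (real^'m)"

definition qf :: "('n::finite, 'm::finite) pspace \<Rightarrow> ('n, 'm) pspace \<Rightarrow> real" where
  "qf z w = fst z \<bullet> fst w - snd z \<bullet> snd w"

definition sqn :: "('n::finite, 'm::finite) pspace \<Rightarrow> real" where
  "sqn z = qf z z"

text \<open>For normal vectors z: norm squared is minus the quadratic form.\<close>
definition nnorm2 :: "('n::finite, 'm::finite) pspace \<Rightarrow> real" where
  "nnorm2 z = - sqn z"

fun C_k :: "nat \<Rightarrow> 'a::euclidean_space set \<Rightarrow> ('a \<Rightarrow> 'b::real_normed_vector) \<Rightarrow> bool" where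
  "C_k 0 S f = continuous_on S f"
| "C_k (Suc k) S f = ((\<forall>x\<in>S. f differentiable (at x)) \<and>
      (\<forall>b\<in>Basis. C_k k S (\<lambda>x. frechet_derivative f (at x) b)))"

definition smooth_on :: "'a::euclidean_space set \<Rightarrow> ('a \<Rightarrow> 'b::real_normed_vector) \<Rightarrow> bool" where
  "smooth_on S f \<longleftrightarrow> (\<forall>k. C_k k S f)"

definition pd :: "(real^'n::finite \<Rightarrow> real^'m::finite) \<Rightarrow> 'n \<Rightarrow> real^'n \<Rightarrow> real^'m" where
  "pd u i x = frechet_derivative u (at x) (axis i 1)"

definition pd2 :: "(real^'n::finite \<Rightarrow> real^'m::finite) \<Rightarrow> 'n \<Rightarrow> 'n \<Rightarrow> real^'n \<Rightarrow> real^'m" where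
  "pd2 u i j x = pd (\<lambda>y. pd u j y) i x"

definition gmat :: "(real^'n::finite \<Rightarrow> real^'m::finite) \<Rightarrow> real^'n \<Rightarrow> real^'n^'n" where
  "gmat u x = (\<chi> i j. (if i = j then 1 else 0) - pd u i x \<bullet> pd u j x)"

definition ginv :: "(real^'n::finite \<Rightarrow> real^'m::finite) \<Rightarrow> real^'n \<Rightarrow> real^'n^'n" where
  "ginv u x = matrix_inv (gmat u x)"

definition spacelike_at :: "(real^'n::finite \<Rightarrow> real^'m::finite) \<Rightarrow> real^'n \<Rightarrow> bool" where
  "spacelike_at u x \<longleftrightarrow> (\<forall>\<xi>::real^'n. \<xi> \<noteq> 0 \<longrightarrow> \<xi> \<bullet> (gmat u x *v \<xi>) > 0)"

text \<open>Tangent vectors dF(e_i) = (e_i, D_i u) of the graph F(x) = (x, u x).\<close>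
definition tang :: "(real^'n::finite \<Rightarrow> real^'m::finite) \<Rightarrow> real^'n \<Rightarrow> 'n \<Rightarrow> ('n, 'm) pspace" where
  "tang u x i = (axis i 1, pd u i x)"

text \<open>Normal projection z^perp (w.r.t. the indefinite form) at the point (x, u x).\<close>
definition nproj :: "(real^'n::finite \<Rightarrow> real^'m::finite) \<Rightarrow> real^'n \<Rightarrow> ('n, 'm) pspace \<Rightarrow> ('n, 'm) pspace" where
  "nproj u x z = z - (\<Sum>i\<in>UNIV. \<Sum>j\<in>UNIV. (ginv u x $ i $ j * qf z (tang u x j)) *\<^sub>R tang u x i)"

text \<open>Mean curvature vector H = (g^ij D_ij F)^perp, where D_ij F = (0, D_ij u).\<close>
definition Hvec :: "(real^'n::finite \<Rightarrow> real^'m::finite) \<Rightarrow> real^'n \<Rightarrow> ('n, 'm) pspace" where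
  "Hvec u x = nproj u x (\<Sum>i\<in>UNIV. \<Sum>j\<in>UNIV. ginv u x $ i $ j *\<^sub>R (0, pd2 u i j x))"

definition vsq :: "(real^'n::finite \<Rightarrow> real^'m::finite) \<Rightarrow> real^'n \<Rightarrow> real" where
  "vsq u x = (\<Sum>A\<in>UNIV. nnorm2 (nproj u x (0, axis A 1)))"

definition slice :: "((real^'n::finite) \<times> real \<Rightarrow> real^'m::finite) \<Rightarrow> real \<Rightarrow> real^'n \<Rightarrow> real^'m" where
  "slice U t = (\<lambda>x. U (x, t))"

definition time_deriv :: "((real^'n::finite) \<times> real \<Rightarrow> real^'m::finite) \<Rightarrow> (real^'n) \<times> real \<Rightarrow> real^'m" where
  "time_deriv U p = frechet_derivative U (at p) (0, 1)"

definition spacelike_entire_graph :: "(real^'n::finite \<Rightarrow> real^'m::finite) \<Rightarrow> bool" where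
  "spacelike_entire_graph u \<longleftrightarrow> smooth_on UNIV u \<and> (\<forall>x. spacelike_at u x)"

definition graphical_smcf :: "((real^'n::finite) \<times> real \<Rightarrow> real^'m::finite) \<Rightarrow> (real^'n \<Rightarrow> real^'m) \<Rightarrow> bool" where
  "graphical_smcf U u0 \<longleftrightarrow>
     smooth_on (UNIV \<times> {0<..}) U \<and> continuous_on (UNIV \<times> {0..}) U \<and>
     (\<forall>x. U (x, 0) = u0 x) \<and>
     (\<forall>t>0. \<forall>x. spacelike_at (slice U t) x \<and>
        time_deriv U (x, t) = (\<Sum>i\<in>UNIV. \<Sum>j\<in>UNIV. ginv (slice U t) x $ i $ j *\<^sub>R pd2 (slice U t) i j x))"

definition tame :: "((real^'n::finite) \<times> real \<Rightarrow> real^'m::finite) \<Rightarrow> real \<Rightarrow> bool" where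
  "tame U C_H \<longleftrightarrow> (\<exists>f::real \<Rightarrow> real. continuous_on {0..} f \<and> f 0 = C_H \<and>
      (\<forall>t\<ge>0. \<forall>x. nnorm2 (Hvec (slice U t) x) \<le> f t))"

definition qs_inside :: "('n::finite, 'm::finite) pspace \<Rightarrow> real \<Rightarrow> real \<Rightarrow> ('n, 'm) pspace set" where
  "qs_inside p R t = {z. sqn (p - z) \<ge> - R\<^sup>2 - 2 * real CARD('n) * t}"

definition graph_at :: "((real^'n::finite) \<times> real \<Rightarrow> real^'m::finite) \<Rightarrow> real \<Rightarrow> ('n, 'm) pspace set" where
  "graph_at U t = {(x, U (x, t)) | x. True}"

end

theory Submission
  imports Defs
begin

lemma mat_entry: "(A ** B) $ i $ j = (\<Sum>k\<in>UNIV. A$i$k * B$k$j)"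
  by (simp add: matrix_matrix_mult_def)

lemma gmat_sym: "gmat u x $ i $ j = gmat u x $ j $ i"
  by (simp add: gmat_def inner_commute)

lemma quad_vec: "\<xi> \<bullet> (A *v \<xi>) = (\<Sum>i\<in>UNIV. \<Sum>j\<in>UNIV. \<xi>$i * A$i$j * \<xi>$j)"
  by (simp add: inner_vec_def matrix_vector_mult_def sum_distrib_left mult.assoc)

lemma ginv_inv:
  assumes "spacelike_at u x"
  shows "gmat u x ** ginv u x = mat 1 \<and> ginv u x ** gmat u x = mat 1"
proof -
  have "\<forall>\<xi>. gmat u x *v \<xi> = 0 \<longrightarrow> \<xi> = 0"
    using assms unfolding spacelike_at_def by (metis inner_zero_right less_irrefl)
  then have "invertible (gmat u x)"
    using matrix_left_invertible_ker invertible_left_inverse by blast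
  then show ?thesis unfolding ginv_def matrix_inv_def invertible_def
    by (rule someI_ex)
qed

lemma g_psd:
  assumes "spacelike_at u x"
  shows "0 \<le> (\<Sum>i\<in>UNIV. \<Sum>j\<in>UNIV. c i * gmat u x $ i $ j * c j)"
proof -
  define \<xi> where "\<xi> = (\<chi> i. c i)"
  have "0 \<le> \<xi> \<bullet> (gmat u x *v \<xi>)"
    using assms unfolding spacelike_at_def by (cases "\<xi> = 0") (auto intro: less_imp_le)
  then show ?thesis unfolding quad_vec \<xi>_def by simp
qed

lemma ginv_sums:
  assumes "spacelike_at u x"
  shows "(\<Sum>k\<in>UNIV. gmat u x $ i $ k * ginv u x $ k $ j) = (if i = j then 1 else 0)"
    and "(\<Sum>k\<in>UNIV. ginv u x $ i $ k * gmat u x $ k $ j) = (if i = j then 1 else 0)"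
proof -
  have "(gmat u x ** ginv u x) $ i $ j = mat 1 $ i $ j" "(ginv u x ** gmat u x) $ i $ j = mat 1 $ i $ j"
    using ginv_inv[OF assms] by simp_all
  then show "(\<Sum>k\<in>UNIV. gmat u x $ i $ k * ginv u x $ k $ j) = (if i = j then 1 else 0)"
    "(\<Sum>k\<in>UNIV. ginv u x $ i $ k * gmat u x $ k $ j) = (if i = j then 1 else 0)"
    unfolding mat_entry by (simp_all add: mat_def)
qed

lemma ginv_sym:
  assumes "spacelike_at u x"
  shows "ginv u x $ i $ j = ginv u x $ j $ i"
proof -
  let ?g = "gmat u x" and ?G = "ginv u x"
  have tg: "transpose ?g = ?g" unfolding vec_eq_iff transpose_def
    by (simp add: gmat_sym[of u x _ "_"])
  have "transpose ?G ** ?g = mat 1"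
    by (metis ginv_inv[OF assms] matrix_transpose_mul tg transpose_mat)
  then have "transpose ?G = ?G"
    by (metis ginv_inv[OF assms] matrix_mul_assoc matrix_mul_lid matrix_mul_rid)
  moreover have "transpose ?G $ j $ i = ?G $ i $ j" by (simp add: transpose_def)
  ultimately show ?thesis by simp
qed

lemma ginv_quad:
  fixes c :: "'n::finite \<Rightarrow> real" and u :: "real^'n \<Rightarrow> real^'m::finite"
  assumes sl: "spacelike_at u x"
  defines "y \<equiv> (\<lambda>i. \<Sum>j\<in>UNIV. ginv u x $ i $ j * c j)"
  shows "(\<Sum>i\<in>UNIV. \<Sum>j\<in>UNIV. c i * ginv u x $ i $ j * c j)
       = (\<Sum>i\<in>UNIV. \<Sum>k\<in>UNIV. y i * gmat u x $ i $ k * y k)"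
proof -
  have inner: "(\<Sum>k\<in>UNIV. gmat u x $ i $ k * y k) = c i" for i
  proof -
    have "(\<Sum>k\<in>UNIV. gmat u x $ i $ k * y k) = (\<Sum>k\<in>UNIV. \<Sum>j\<in>UNIV. gmat u x $ i $ k * ginv u x $ k $ j * c j)"
      unfolding y_def by (simp add: sum_distrib_left mult.assoc)
    also have "\<dots> = (\<Sum>j\<in>UNIV. \<Sum>k\<in>UNIV. gmat u x $ i $ k * ginv u x $ k $ j * c j)"
      by (rule sum.swap)
    also have "\<dots> = (\<Sum>j\<in>UNIV. (\<Sum>k\<in>UNIV. gmat u x $ i $ k * ginv u x $ k $ j) * c j)"
      by (simp add: sum_distrib_right)
    also have "\<dots> = (\<Sum>j\<in>UNIV. (if i = j then 1 else 0) * c j)"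
      by (simp only: ginv_sums[OF sl])
    also have "\<dots> = (\<Sum>j\<in>UNIV. (if i = j then c j else 0))"
      by (rule sum.cong) auto
    also have "\<dots> = c i" by simp
    finally show ?thesis .
  qed
  have "(\<Sum>i\<in>UNIV. \<Sum>k\<in>UNIV. y i * gmat u x $ i $ k * y k) = (\<Sum>i\<in>UNIV. y i * (\<Sum>k\<in>UNIV. gmat u x $ i $ k * y k))"
    by (simp add: sum_distrib_left mult.assoc)
  also have "\<dots> = (\<Sum>i\<in>UNIV. y i * c i)"
    by (simp only: inner)
  also have "\<dots> = (\<Sum>i\<in>UNIV. \<Sum>j\<in>UNIV. c i * ginv u x $ i $ j * c j)"
    unfolding y_def by (simp add: sum_distrib_right sum_distrib_left mult.commute mult.left_commute)
  finally show ?thesis by simp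
qed

lemma ginv_psd:
  fixes c :: "'n::finite \<Rightarrow> real" and u :: "real^'n \<Rightarrow> real^'m::finite"
  assumes "spacelike_at u x"
  shows "0 \<le> (\<Sum>i\<in>UNIV. \<Sum>j\<in>UNIV. c i * ginv u x $ i $ j * c j)"
  unfolding ginv_quad[OF assms] by (rule g_psd[OF assms])

lemma qf_sum_left: "qf (\<Sum>i\<in>S. f i) w = (\<Sum>i\<in>S. qf (f i) w)"
  by (simp add: qf_def fst_sum snd_sum inner_sum_left sum_subtractf)
lemma qf_commute: "qf z w = qf w z"
  by (simp add: qf_def inner_commute)
lemma qf_sum_right: "qf w (\<Sum>i\<in>S. f i) = (\<Sum>i\<in>S. qf w (f i))"
  by (simp add: qf_commute[of w] qf_sum_left)
lemma qf_scaleR_left: "qf (c *\<^sub>R z) w = c * qf z w"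
  by (simp add: qf_def algebra_simps)
lemma qf_scaleR_right: "qf w (c *\<^sub>R z) = c * qf w z"
  by (simp add: qf_def algebra_simps)
lemma qf_diff_left: "qf (z - z') w = qf z w - qf z' w"
  by (simp add: qf_def algebra_simps)
lemma qf_diff_right: "qf w (z - z') = qf w z - qf w z'"
  by (simp add: qf_def algebra_simps)
lemma qf_tang: "qf (tang u x i) (tang u x k) = gmat u x $ i $ k"
  by (simp add: qf_def tang_def gmat_def inner_axis_axis)

lemma nproj_norm:
  fixes u :: "real^'n::finite \<Rightarrow> real^'m::finite"
  fixes z :: "('n, 'm) pspace"
  assumes sl: "spacelike_at u x"
  defines "q \<equiv> (\<lambda>j. qf z (tang u x j))"
  shows "nnorm2 (nproj u x z) = - sqn z + (\<Sum>i\<in>UNIV. \<Sum>j\<in>UNIV. q i * ginv u x $ i $ j * q j)"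
proof -
  define c where "c = (\<lambda>i. \<Sum>j\<in>UNIV. ginv u x $ i $ j * q j)"
  define T where "T = (\<Sum>i\<in>UNIV. c i *\<^sub>R tang u x i)"
  define Q where "Q = (\<Sum>i\<in>UNIV. \<Sum>j\<in>UNIV. q i * ginv u x $ i $ j * q j)"
  have nT: "nproj u x z = z - T"
    unfolding nproj_def T_def c_def q_def by (simp add: scaleR_sum_left)
  have zT: "qf z T = Q"
  proof -
    have "qf z T = (\<Sum>i\<in>UNIV. c i * q i)"
      unfolding T_def q_def by (simp add: qf_sum_right qf_scaleR_right)
    also have "\<dots> = Q"
      unfolding Q_def c_def by (simp add: sum_distrib_right sum_distrib_left mult.commute mult.left_commute)
    finally show ?thesis .
  qed
  have TT: "qf T T = Q"
  proof -
    have "qf T T = (\<Sum>i\<in>UNIV. \<Sum>k\<in>UNIV. c i * gmat u x $ i $ k * c k)"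
      unfolding T_def by (simp add: qf_sum_right qf_sum_left qf_scaleR_right qf_scaleR_left qf_tang
          sum_distrib_left mult.commute mult.left_commute)
        (intro sum.cong refl, metis gmat_sym)
    also have "\<dots> = Q"
      unfolding Q_def c_def by (rule ginv_quad[OF sl, symmetric])
    finally show ?thesis .
  qed
  have "sqn (z - T) = sqn z - 2 * qf z T + qf T T"
    unfolding sqn_def by (simp add: qf_diff_left qf_diff_right qf_commute[of T z])
  then show ?thesis unfolding nnorm2_def nT zT TT Q_def by simp
qed

lemma nproj_vertical:
  fixes u :: "real^'n::finite \<Rightarrow> real^'m::finite"
  assumes sl: "spacelike_at u x"
  shows "nnorm2 (nproj u x (0, y)) \<ge> y \<bullet> y"
proof -
  have "sqn ((0::real^'n), y) = - (y \<bullet> y)" by (simp add: sqn_def qf_def)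
  then show ?thesis unfolding nproj_norm[OF sl] using ginv_psd[OF sl] by simp
qed

definition quad :: "('n::finite \<Rightarrow> 'n \<Rightarrow> real) \<Rightarrow> ('n \<Rightarrow> real) \<Rightarrow> real" where
  "quad A x = (\<Sum>i\<in>UNIV. \<Sum>j\<in>UNIV. x i * A i j * x j)"

lemma if01_mult: "(if P then 1 else 0) * (y::real) = (if P then y else 0)"
  "y * (if P then 1 else 0) = (if P then y else 0)" by simp_all

lemma sum_if_out: "(\<Sum>j\<in>S. if P then f j else (0::real)) = (if P then (\<Sum>j\<in>S. f j) else 0)"
  by simp

lemma quad_shift:
  fixes A :: "'n::finite \<Rightarrow> 'n \<Rightarrow> real"
  assumes sym: "\<And>i j. A i j = A j i"
  shows "quad A (\<lambda>l. x l + t * (if l = k then 1 else 0)) = quad A x + 2 * t * (\<Sum>j\<in>UNIV. A k j * x j) + t^2 * A k k"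
proof -
  define e where "e = (\<lambda>l::'n. if l = k then 1 else (0::real))"
  have ex: "(x i + t * e i) * A i j * (x j + t * e j) = x i * A i j * x j + t * (e i * (A i j * x j)) + t * (e j * (x i * A i j)) + t^2 * (e i * (e j * A i j))" for i j
    by (simp add: algebra_simps power2_eq_square)
  have s1: "(\<Sum>i\<in>UNIV. \<Sum>j\<in>UNIV. e i * (A i j * x j)) = (\<Sum>j\<in>UNIV. A k j * x j)"
    unfolding e_def by (simp add: if01_mult sum_if_out)
  have s2: "(\<Sum>i\<in>UNIV. \<Sum>j\<in>UNIV. e j * (x i * A i j)) = (\<Sum>j\<in>UNIV. A k j * x j)"
    unfolding e_def by (simp add: if01_mult sum_if_out sym[of _ k] mult.commute)
  have s3: "(\<Sum>i\<in>UNIV. \<Sum>j\<in>UNIV. e i * (e j * A i j)) = A k k"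
    unfolding e_def by (simp add: if01_mult sum_if_out)
  have eq: "quad A (\<lambda>l. x l + t * e l) = quad A x + t * (\<Sum>i\<in>UNIV. \<Sum>j\<in>UNIV. e i * (A i j * x j))
     + t * (\<Sum>i\<in>UNIV. \<Sum>j\<in>UNIV. e j * (x i * A i j)) + t^2 * (\<Sum>i\<in>UNIV. \<Sum>j\<in>UNIV. e i * (e j * A i j))"
    unfolding quad_def ex by (simp add: sum.distrib sum_distrib_left)
  show ?thesis using eq[unfolded s1 s2 s3] unfolding e_def by simp
qed

lemma psd_cs:
  fixes A :: "'n::finite \<Rightarrow> 'n \<Rightarrow> real"
  assumes sym: "\<And>i j. A i j = A j i" and psd: "\<And>x. 0 \<le> quad A x"
  shows "(\<Sum>j\<in>UNIV. A k j * x j)^2 \<le> A k k * quad A x"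
proof -
  define v where "v = (\<Sum>j\<in>UNIV. A k j * x j)"
  define a where "a = A k k"
  have f: "0 \<le> quad A x + 2 * t * v + t^2 * a" for t
    using psd[of "\<lambda>l. x l + t * (if l = k then 1 else 0)"] unfolding quad_shift[OF sym] v_def a_def .
  show ?thesis
  proof (cases "a = 0")
    case True
    have "v = 0"
    proof (rule ccontr)
      assume "v \<noteq> 0"
      have "0 \<le> quad A x + 2 * (-(quad A x + 1) / (2 * v)) * v"
        using f[of "-(quad A x + 1) / (2 * v)"] True by simp
      also have "\<dots> = -1" using \<open>v \<noteq> 0\<close> by (simp add: field_simps)
      finally show False by simp
    qed
    then show ?thesis using True unfolding v_def a_def by simp
  next
    case False
    have a0: "0 \<le> a" using f[of 0] f[of 1] psd[of "\<lambda>l. if l = k then 1 else 0"]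
      unfolding a_def quad_def by (simp add: if01_mult)
    then have ap: "0 < a" using False by simp
    have "0 \<le> quad A x + 2 * (- v / a) * v + (- v / a)^2 * a" by (rule f)
    also have "\<dots> = quad A x - v^2 / a" using ap by (simp add: field_simps power2_eq_square)
    finally have "v^2 / a \<le> quad A x" by simp
    then show ?thesis using ap unfolding v_def[symmetric] a_def[symmetric] by (simp add: field_simps mult.commute)
  qed
qed

lemma quad_unit: "quad A (\<lambda>l. if l = k then 1 else 0) = A k k"
  unfolding quad_def by (simp add: if01_mult sum_if_out)

lemma quad_minus_outer:
  "quad (\<lambda>i j. A i j - w i * w j) x = quad A x - (\<Sum>i\<in>UNIV. w i * x i)^2"
proof -
  have "quad (\<lambda>i j. A i j - w i * w j) x = quad A x - (\<Sum>i\<in>UNIV. \<Sum>j\<in>UNIV. (w i * x i) * (w j * x j))"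
    unfolding quad_def by (simp add: algebra_simps sum_subtractf)
  also have "(\<Sum>i\<in>UNIV. \<Sum>j\<in>UNIV. (w i * x i) * (w j * x j)) = (\<Sum>i\<in>UNIV. w i * x i)^2"
    by (simp add: power2_eq_square sum_product)
  finally show ?thesis .
qed

lemma psd_decomp_aux:
  fixes S :: "'n::finite set"
  assumes "finite S"
  shows "\<forall>A::'n\<Rightarrow>'n\<Rightarrow>real. (\<forall>i j. A i j = A j i) \<longrightarrow> (\<forall>x. 0 \<le> quad A x) \<longrightarrow>
     (\<forall>i j. i \<notin> S \<longrightarrow> A i j = 0) \<longrightarrow> (\<exists>ws. \<forall>i j. A i j = (\<Sum>w\<leftarrow>ws. w i * w j))"
  using assms
proof (induction S rule: finite_induct)
  case empty
  show ?case by (intro allI impI exI[of _ "[]"]) auto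
next
  case (insert k S)
  show ?case
  proof (intro allI impI)
    fix A :: "'n\<Rightarrow>'n\<Rightarrow>real"
    assume sym: "\<forall>i j. A i j = A j i" and psd: "\<forall>x. 0 \<le> quad A x"
      and supp: "\<forall>i j. i \<notin> insert k S \<longrightarrow> A i j = 0"
    show "\<exists>ws. \<forall>i j. A i j = (\<Sum>w\<leftarrow>ws. w i * w j)"
    proof (cases "A k k = 0")
      case True
      have "(\<Sum>j\<in>UNIV. A k j * A k j)^2 \<le> A k k * quad A (\<lambda>j. A k j)"
        by (rule psd_cs) (use sym psd in auto)
      then have "(\<Sum>j\<in>UNIV. A k j * A k j) = 0" using True by simp
      then have row: "A k j = 0" for j
        by (simp add: sum_nonneg_eq_0_iff)
      have "\<forall>i j. i \<notin> S \<longrightarrow> A i j = 0" using supp row by (metis insert_iff)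
      then show ?thesis using insert.IH sym psd by blast
    next
      case False
      have a0: "0 < A k k" using psd quad_unit[of A k] False
        by (metis order_le_less)
      define w where "w = (\<lambda>l. A k l / sqrt (A k k))"
      have ww: "w i * w j = A k i * A k j / A k k" for i j
        unfolding w_def using a0 by (simp add: field_simps)
      define A' where "A' = (\<lambda>i j. A i j - w i * w j)"
      have sym': "\<forall>i j. A' i j = A' j i" unfolding A'_def using sym ww by (simp add: mult.commute)
      have supp': "\<forall>i j. i \<notin> S \<longrightarrow> A' i j = 0"
      proof (intro allI impI)
        fix i j assume "i \<notin> S"
        show "A' i j = 0"
        proof (cases "i = k")
          case True then show ?thesis unfolding A'_def ww using a0 by simp
        next
          case False
          then have "A i j = 0" "A k i = 0" using supp sym \<open>i \<notin> S\<close> by auto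
          then show ?thesis unfolding A'_def ww by simp
        qed
      qed
      have psd': "\<forall>x. 0 \<le> quad A' x"
      proof
        fix x
        have cs: "(\<Sum>j\<in>UNIV. A k j * x j)^2 \<le> A k k * quad A x"
          by (rule psd_cs) (use sym psd in auto)
        have "(\<Sum>i\<in>UNIV. w i * x i) = (\<Sum>j\<in>UNIV. A k j * x j) / sqrt (A k k)"
          unfolding w_def by (simp add: sum_divide_distrib)
        then have "(\<Sum>i\<in>UNIV. w i * x i)^2 = (\<Sum>j\<in>UNIV. A k j * x j)^2 / A k k"
          using a0 by (simp add: power_divide)
        also have "\<dots> \<le> quad A x" using cs a0 by (simp add: divide_le_eq mult.commute)
        finally show "0 \<le> quad A' x" unfolding A'_def quad_minus_outer by simp
      qed
      obtain ws where ws: "\<forall>i j. A' i j = (\<Sum>w\<leftarrow>ws. w i * w j)"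
        using insert.IH sym' psd' supp' by blast
      show ?thesis
        by (rule exI[of _ "w # ws"]) (use ws in \<open>auto simp add: A'_def algebra_simps\<close>)
    qed
  qed
qed

lemma psd_decomp:
  fixes A :: "'n::finite \<Rightarrow> 'n \<Rightarrow> real"
  assumes "\<And>i j. A i j = A j i" and "\<And>x. 0 \<le> quad A x"
  shows "\<exists>ws. \<forall>i j. A i j = (\<Sum>w\<leftarrow>ws. w i * w j)"
  using psd_decomp_aux[of "UNIV::'n set"] assms by auto

lemma trace_psd:
  fixes A M :: "'n::finite \<Rightarrow> 'n \<Rightarrow> real"
  assumes "\<And>i j. A i j = A j i" and "\<And>x. 0 \<le> quad A x" and "\<And>x. 0 \<le> quad M x"
  shows "0 \<le> (\<Sum>i\<in>UNIV. \<Sum>j\<in>UNIV. A i j * M i j)"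
proof -
  obtain ws where ws: "\<forall>i j. A i j = (\<Sum>w\<leftarrow>ws. w i * w j)"
    using psd_decomp assms(1,2) by blast
  have "(\<Sum>i\<in>UNIV. \<Sum>j\<in>UNIV. (\<Sum>w\<leftarrow>ws. w i * w j) * M i j) = (\<Sum>w\<leftarrow>ws. quad M w)" for ws
    by (induction ws) (simp_all add: quad_def algebra_simps sum.distrib)
  then show ?thesis using ws assms(3) by (auto intro!: sum_list_nonneg)
qed

lemma second_order_min:
  fixes k k' :: "real \<Rightarrow> real"
  assumes der: "\<And>s. (k has_real_derivative k' s) (at s)"
    and der2: "(k' has_real_derivative D) (at 0)"
    and mn: "\<And>s. k 0 \<le> k s"
  shows "0 \<le> D"
proof (rule ccontr)
  assume "\<not> 0 \<le> D"
  then have D: "D < 0" by simp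
  have k0: "k' 0 = 0"
    by (rule DERIV_local_min[OF der[of 0], of 1]) (use mn in auto)
  obtain d where d: "d > 0" "\<forall>h>0. h < d \<longrightarrow> k' 0 > k' (0 + h)"
    using DERIV_neg_dec_right[OF der2 D] by blast
  define h where "h = d / 2"
  have h: "0 < h" "h < d" using d by (auto simp: h_def)
  obtain z where z: "z > 0" "z < h" "k h - k 0 = (h - 0) * k' z"
    using MVT2[of 0 h k k'] h der by blast
  have "k' z < 0" using d z h k0 by force
  then have "k h - k 0 < 0" using z h by (simp add: mult_pos_neg)
  then show False using mn[of h] by simp
qed

lemma first_order_left_min:
  fixes k :: "real \<Rightarrow> real"
  assumes der: "(k has_real_derivative D) (at t0)"
    and dl: "\<delta> > 0" and mn: "\<And>s. t0 - \<delta> < s \<Longrightarrow> s \<le> t0 \<Longrightarrow> k t0 \<le> k s"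
  shows "D \<le> 0"
proof (rule ccontr)
  assume "\<not> D \<le> 0"
  then have "0 < D" by simp
  obtain d where d: "d > 0" "\<forall>h>0. h < d \<longrightarrow> k (t0 - h) < k t0"
    using DERIV_pos_inc_left[OF der \<open>0 < D\<close>] by blast
  define h where "h = min d \<delta> / 2"
  have "0 < h" "h < d" "h < \<delta>" using d dl by (auto simp: h_def)
  then have "k (t0 - h) < k t0" "k t0 \<le> k (t0 - h)" using d mn[of "t0 - h"] by auto
  then show False by simp
qed

lemma slice_has_derivative:
  assumes "(F has_derivative F') (at (y, t))"
  shows "((\<lambda>y. F (y, t)) has_derivative (\<lambda>h. F' (h, 0))) (at y)"
proof -
  have "((\<lambda>y. (y, t)) has_derivative (\<lambda>h. (h, 0))) (at y)"
    by (auto intro!: derivative_eq_intros)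
  from diff_chain_at[OF this, of F] assms show ?thesis by (simp add: o_def)
qed

lemma time_has_derivative:
  assumes "(F has_derivative F') (at (y, t))"
  shows "((\<lambda>t. F (y, t)) has_derivative (\<lambda>h. F' (0, h))) (at t)"
proof -
  have "((\<lambda>t. (y, t)) has_derivative (\<lambda>h. (0, h))) (at t)"
    by (auto intro!: derivative_eq_intros)
  from diff_chain_at[OF this, of F] assms show ?thesis by (simp add: o_def)
qed

lemma line_has_derivative:
  assumes "(F has_derivative F') (at (x0 + s *\<^sub>R \<xi>, t))"
  shows "((\<lambda>s. F (x0 + s *\<^sub>R \<xi>, t)) has_derivative (\<lambda>h. F' (h *\<^sub>R \<xi>, 0))) (at s)"
proof -
  have "((\<lambda>s. (x0 + s *\<^sub>R \<xi>, t)) has_derivative (\<lambda>h. (h *\<^sub>R \<xi>, 0))) (at s)"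
    by (auto intro!: derivative_eq_intros)
  from diff_chain_at[OF this, of F] assms show ?thesis by (simp add: o_def)
qed

lemma vec_expand: "(\<xi>::real^'n::finite) = (\<Sum>j\<in>UNIV. (\<xi>$j) *\<^sub>R axis j 1)"
  using basis_expansion[of \<xi>] by (simp add: scalar_mult_eq_scaleR)

lemma pair_expand: "((\<xi>::real^'n::finite), (0::'b::real_vector)) = (\<Sum>j\<in>UNIV. (\<xi>$j) *\<^sub>R (axis j 1, 0))"
proof -
  have "fst (\<Sum>j\<in>UNIV. (\<xi>$j) *\<^sub>R (axis j (1::real), (0::'b))) = \<xi>"
    by (simp add: fst_sum vec_expand[symmetric])
  moreover have "snd (\<Sum>j\<in>UNIV. (\<xi>$j) *\<^sub>R (axis j (1::real), (0::'b))) = 0"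
    by (simp add: snd_sum)
  ultimately show ?thesis by (metis prod.collapse)
qed

lemma lin_expand:
  assumes "linear L"
  shows "L ((\<xi>::real^'n::finite), (0::'b::real_vector)) = (\<Sum>j\<in>UNIV. (\<xi>$j) *\<^sub>R L (axis j 1, 0))"
  by (subst pair_expand) (simp only: real_vector.linear_sum[OF assms] linear_cmul[OF assms])

lemma lin_expand1:
  assumes "linear L"
  shows "L (\<xi>::real^'n::finite) = (\<Sum>j\<in>UNIV. (\<xi>$j) *\<^sub>R L (axis j 1))"
  by (subst vec_expand) (simp add: real_vector.linear_sum[OF assms] linear_cmul[OF assms])

lemma pair_time: "((0::'a::real_vector), (h::real)) = h *\<^sub>R (0, 1)" by simp

lemma smooth_facts:
  assumes "smooth_on S U" "z \<in> S"
  shows "(U has_derivative frechet_derivative U (at z)) (at z)"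
    and "b \<in> Basis \<Longrightarrow> ((\<lambda>z. frechet_derivative U (at z) b) has_derivative
            frechet_derivative (\<lambda>z. frechet_derivative U (at z) b) (at z)) (at z)"
proof -
  have "C_k (Suc (Suc 0)) S U" using assms(1) unfolding smooth_on_def by blast
  then have d1: "\<forall>x\<in>S. U differentiable (at x)"
    and d2: "\<forall>b\<in>Basis. \<forall>x\<in>S. (\<lambda>z. frechet_derivative U (at z) b) differentiable (at x)"
    by simp_all
  show "(U has_derivative frechet_derivative U (at z)) (at z)"
    using d1 assms(2) frechet_derivative_works by blast
  show "b \<in> Basis \<Longrightarrow> ((\<lambda>z. frechet_derivative U (at z) b) has_derivative
            frechet_derivative (\<lambda>z. frechet_derivative U (at z) b) (at z)) (at z)"
    using d2 assms(2) frechet_derivative_works by blast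
qed

lemma basis_pair: "((axis j (1::real))::real^'n::finite, (0::real)) \<in> Basis"
  by (simp add: Basis_prod_def)

lemma basis_time: "((0::real^'n::finite), (1::real)) \<in> Basis"
  by (simp add: Basis_prod_def)

lemma flow_der:
  fixes U :: "(real^'n::finite) \<times> real \<Rightarrow> real^'m::finite"
  assumes "graphical_smcf U u0" "t > 0"
  shows "(U has_derivative frechet_derivative U (at (y, t))) (at (y, t))"
  using assms smooth_facts(1)[of "UNIV \<times> {0<..}" U "(y,t)"] unfolding graphical_smcf_def by auto

lemma flow_der2:
  fixes U :: "(real^'n::finite) \<times> real \<Rightarrow> real^'m::finite"
  assumes "graphical_smcf U u0" "t > 0"
  shows "((\<lambda>z. frechet_derivative U (at z) (axis j 1, 0)) has_derivative
            frechet_derivative (\<lambda>z. frechet_derivative U (at z) (axis j 1, 0)) (at (y, t))) (at (y, t))"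
  using assms smooth_facts(2)[of "UNIV \<times> {0<..}" U "(y,t)" "(axis j 1, 0)"] basis_pair
  unfolding graphical_smcf_def by auto

lemma pd_flow:
  fixes U :: "(real^'n::finite) \<times> real \<Rightarrow> real^'m::finite"
  assumes "graphical_smcf U u0" "t > 0"
  shows "pd (slice U t) j y = frechet_derivative U (at (y, t)) (axis j 1, 0)"
proof -
  have "(\<lambda>h. frechet_derivative U (at (y, t)) (h, 0)) = frechet_derivative (\<lambda>y. U (y, t)) (at y)"
    by (rule frechet_derivative_at[OF slice_has_derivative[OF flow_der[OF assms]]])
  then show ?thesis unfolding pd_def slice_def by metis
qed

lemma pd2_flow:
  fixes U :: "(real^'n::finite) \<times> real \<Rightarrow> real^'m::finite"
  assumes "graphical_smcf U u0" "t > 0"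
  shows "pd2 (slice U t) i j y = frechet_derivative (\<lambda>z. frechet_derivative U (at z) (axis j 1, 0)) (at (y, t)) (axis i 1, 0)"
proof -
  have e: "(\<lambda>y. pd (slice U t) j y) = (\<lambda>y. frechet_derivative U (at (y, t)) (axis j 1, 0))"
    using pd_flow[OF assms] by auto
  have fd: "(\<lambda>h. frechet_derivative (\<lambda>z. frechet_derivative U (at z) (axis j 1, 0)) (at (y, t)) (h, 0))
      = frechet_derivative (\<lambda>y. frechet_derivative U (at (y, t)) (axis j 1, 0)) (at y)"
    by (rule frechet_derivative_at[OF slice_has_derivative[OF flow_der2[OF assms]]])
  show ?thesis unfolding pd2_def e pd_def by (simp only: fd[symmetric])
qed

lemma time_flow:
  fixes U :: "(real^'n::finite) \<times> real \<Rightarrow> real^'m::finite"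
  assumes "graphical_smcf U u0" "t > 0"
  shows "((\<lambda>s. U (y, s)) has_derivative (\<lambda>h. h *\<^sub>R time_deriv U (y, t))) (at t)"
proof -
  have l: "linear (frechet_derivative U (at (y, t)))"
    using has_derivative_bounded_linear[OF flow_der[OF assms]] bounded_linear.linear by blast
  have eq: "(\<lambda>h. frechet_derivative U (at (y, t)) (0, h)) = (\<lambda>h. h *\<^sub>R time_deriv U (y, t))"
    unfolding time_deriv_def by (rule ext, subst pair_time, rule linear_cmul[OF l])
  have "((\<lambda>s. U (y, s)) has_derivative (\<lambda>h. frechet_derivative U (at (y, t)) (0, h))) (at t)"
    by (rule time_has_derivative[OF flow_der[OF assms]])
  then show ?thesis unfolding eq .
qed

lemma flow_lin:
  fixes U :: "(real^'n::finite) \<times> real \<Rightarrow> real^'m::finite"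
  assumes "graphical_smcf U u0" "t > 0"
  shows "linear (frechet_derivative U (at (y, t)))"
  using has_derivative_bounded_linear[OF flow_der[OF assms]] bounded_linear.linear by blast

lemma flow_lin2:
  fixes U :: "(real^'n::finite) \<times> real \<Rightarrow> real^'m::finite"
  assumes "graphical_smcf U u0" "t > 0"
  shows "linear (frechet_derivative (\<lambda>z. frechet_derivative U (at z) (axis j 1, 0)) (at (y, t)))"
  using has_derivative_bounded_linear[OF flow_der2[OF assms]] bounded_linear.linear by blast

lemma line_second:
  fixes U :: "(real^'n::finite) \<times> real \<Rightarrow> real^'m::finite" and a x0 \<xi> :: "real^'n" and b :: "real^'m"
  assumes flow: "graphical_smcf U u0" and t0: "t0 > 0"
    and mn: "\<And>x. (a - x0) \<bullet> (a - x0) - (b - U (x0, t0)) \<bullet> (b - U (x0, t0))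
                \<le> (a - x) \<bullet> (a - x) - (b - U (x, t0)) \<bullet> (b - U (x, t0))"
  defines "P \<equiv> (\<lambda>j z. frechet_derivative U (at z) (axis j 1, 0))"
  defines "W1 \<equiv> (\<Sum>j\<in>UNIV. (\<xi>$j) *\<^sub>R P j (x0, t0))"
  defines "W2 \<equiv> (\<Sum>j\<in>UNIV. (\<xi>$j) *\<^sub>R (\<Sum>i\<in>UNIV. (\<xi>$i) *\<^sub>R frechet_derivative (P j) (at (x0, t0)) (axis i 1, 0)))"
  shows "0 \<le> 2 * (\<xi> \<bullet> \<xi>) - 2 * (W1 \<bullet> W1) + 2 * ((b - U (x0, t0)) \<bullet> W2)"
proof -
  define W1f where "W1f = (\<lambda>s. \<Sum>j\<in>UNIV. (\<xi>$j) *\<^sub>R P j (x0 + s *\<^sub>R \<xi>, t0))"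
  have w_der: "((\<lambda>s. U (x0 + s *\<^sub>R \<xi>, t0)) has_derivative (\<lambda>h. h *\<^sub>R W1f s)) (at s)" for s
  proof -
    have l: "linear (frechet_derivative U (at (x0 + s *\<^sub>R \<xi>, t0)))" by (rule flow_lin[OF flow t0])
    have "(\<lambda>h. frechet_derivative U (at (x0 + s *\<^sub>R \<xi>, t0)) (h *\<^sub>R \<xi>, 0)) = (\<lambda>h. h *\<^sub>R W1f s)"
    proof
      fix h :: real
      have "frechet_derivative U (at (x0 + s *\<^sub>R \<xi>, t0)) (h *\<^sub>R \<xi>, 0)
           = h *\<^sub>R frechet_derivative U (at (x0 + s *\<^sub>R \<xi>, t0)) (\<xi>, 0)"
        using linear_cmul[OF l, of h "(\<xi>, 0)"] by simp
      also have "\<dots> = h *\<^sub>R W1f s"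
        unfolding W1f_def P_def by (simp only: lin_expand[OF l, of \<xi>])
      finally show "frechet_derivative U (at (x0 + s *\<^sub>R \<xi>, t0)) (h *\<^sub>R \<xi>, 0) = h *\<^sub>R W1f s" .
    qed
    with line_has_derivative[OF flow_der[OF flow t0, of "x0 + s *\<^sub>R \<xi>"]] show ?thesis by simp
  qed
  have W1_der: "(W1f has_derivative (\<lambda>h. h *\<^sub>R W2)) (at 0)"
  proof -
    have dj: "((\<lambda>s. P j (x0 + s *\<^sub>R \<xi>, t0)) has_derivative
              (\<lambda>h. frechet_derivative (P j) (at (x0, t0)) (h *\<^sub>R \<xi>, 0))) (at 0)" for j
      using line_has_derivative[OF flow_der2[OF flow t0, of j "x0 + 0 *\<^sub>R \<xi>"]] unfolding P_def by simp
    have "(W1f has_derivative (\<lambda>h. \<Sum>j\<in>UNIV. (\<xi>$j) *\<^sub>R frechet_derivative (P j) (at (x0, t0)) (h *\<^sub>R \<xi>, 0))) (at 0)"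
      unfolding W1f_def by (intro has_derivative_sum has_derivative_scaleR_right dj)
    moreover have "(\<lambda>h. \<Sum>j\<in>UNIV. (\<xi>$j) *\<^sub>R frechet_derivative (P j) (at (x0, t0)) (h *\<^sub>R \<xi>, 0)) = (\<lambda>h. h *\<^sub>R W2)"
    proof
      fix h :: real
      have "frechet_derivative (P j) (at (x0, t0)) (h *\<^sub>R \<xi>, 0) = h *\<^sub>R (\<Sum>i\<in>UNIV. (\<xi>$i) *\<^sub>R frechet_derivative (P j) (at (x0, t0)) (axis i 1, 0))" for j
      proof -
        have l: "linear (frechet_derivative (P j) (at (x0, t0)))" unfolding P_def by (rule flow_lin2[OF flow t0])
        have "frechet_derivative (P j) (at (x0, t0)) (h *\<^sub>R \<xi>, 0) = h *\<^sub>R frechet_derivative (P j) (at (x0, t0)) (\<xi>, 0)"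
          using linear_cmul[OF l, of h "(\<xi>, 0)"] by simp
        then show ?thesis by (simp only: lin_expand[OF l, of \<xi>])
      qed
      then show "(\<Sum>j\<in>UNIV. (\<xi>$j) *\<^sub>R frechet_derivative (P j) (at (x0, t0)) (h *\<^sub>R \<xi>, 0)) = h *\<^sub>R W2"
        unfolding W2_def by (simp add: scaleR_sum_right mult.commute mult.left_commute)
    qed
    ultimately show ?thesis by simp
  qed
  define k where "k = (\<lambda>s. (a - (x0 + s *\<^sub>R \<xi>)) \<bullet> (a - (x0 + s *\<^sub>R \<xi>)) - (b - U (x0 + s *\<^sub>R \<xi>, t0)) \<bullet> (b - U (x0 + s *\<^sub>R \<xi>, t0)))"
  define k' where "k' = (\<lambda>s. 2 * ((a - (x0 + s *\<^sub>R \<xi>)) \<bullet> (- \<xi>)) + 2 * ((b - U (x0 + s *\<^sub>R \<xi>, t0)) \<bullet> W1f s))"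
  have kd: "(k has_real_derivative k' s) (at s)" for s
  proof -
    have f1: "((\<lambda>s. a - (x0 + s *\<^sub>R \<xi>)) has_derivative (\<lambda>h. - (h *\<^sub>R \<xi>))) (at s)"
      by (auto intro!: derivative_eq_intros)
    have f2: "((\<lambda>s. b - U (x0 + s *\<^sub>R \<xi>, t0)) has_derivative (\<lambda>h. - (h *\<^sub>R W1f s))) (at s)"
      using has_derivative_diff[OF has_derivative_const[of b] w_der[of s]] by simp
    have "(k has_derivative (\<lambda>h. ((a - (x0 + s *\<^sub>R \<xi>)) \<bullet> (- (h *\<^sub>R \<xi>)) + (- (h *\<^sub>R \<xi>)) \<bullet> (a - (x0 + s *\<^sub>R \<xi>)))
        - ((b - U (x0 + s *\<^sub>R \<xi>, t0)) \<bullet> (- (h *\<^sub>R W1f s)) + (- (h *\<^sub>R W1f s)) \<bullet> (b - U (x0 + s *\<^sub>R \<xi>, t0))))) (at s)"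
      unfolding k_def by (intro has_derivative_diff has_derivative_inner f1 f2)
    then show ?thesis unfolding has_field_derivative_def
      by (rule has_derivative_eq_rhs) (simp add: fun_eq_iff k'_def inner_commute algebra_simps)
  qed
  have kd2: "(k' has_real_derivative (2 * (\<xi> \<bullet> \<xi>) - 2 * (W1 \<bullet> W1) + 2 * ((b - U (x0, t0)) \<bullet> W2))) (at 0)"
  proof -
    have "W1f 0 = W1" unfolding W1f_def W1_def by simp
    then show ?thesis
    proof -
      have f1: "((\<lambda>s. a - (x0 + s *\<^sub>R \<xi>)) has_derivative (\<lambda>h. - (h *\<^sub>R \<xi>))) (at 0)"
        by (auto intro!: derivative_eq_intros)
      have f2: "((\<lambda>s. b - U (x0 + s *\<^sub>R \<xi>, t0)) has_derivative (\<lambda>h. - (h *\<^sub>R W1f 0))) (at 0)"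
        using has_derivative_diff[OF has_derivative_const[of b] w_der[of 0]] by simp
      have "(k' has_derivative (\<lambda>h. 2 * ((a - (x0 + 0 *\<^sub>R \<xi>)) \<bullet> 0 + (- (h *\<^sub>R \<xi>)) \<bullet> (- \<xi>))
          + 2 * ((b - U (x0 + 0 *\<^sub>R \<xi>, t0)) \<bullet> (h *\<^sub>R W2) + (- (h *\<^sub>R W1f 0)) \<bullet> W1f 0))) (at 0)"
        unfolding k'_def
        by (intro has_derivative_add has_derivative_mult_right has_derivative_inner f1 f2 W1_der has_derivative_const)
      then show ?thesis unfolding has_field_derivative_def \<open>W1f 0 = W1\<close>
        by (rule has_derivative_eq_rhs) (simp add: fun_eq_iff inner_commute algebra_simps)
    qed
  qed
  have "k 0 \<le> k s" for s unfolding k_def using mn[of "x0 + s *\<^sub>R \<xi>"] by simp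
  then show ?thesis by (rule second_order_min[OF kd kd2])
qed

lemma flow_spacelike:
  assumes "graphical_smcf U u0" "t > 0"
  shows "spacelike_at (slice U t) x"
  using assms unfolding graphical_smcf_def by blast

lemma flow_eq:
  assumes "graphical_smcf U u0" "t > 0"
  shows "time_deriv U (x, t) = (\<Sum>i\<in>UNIV. \<Sum>j\<in>UNIV. ginv (slice U t) x $ i $ j *\<^sub>R pd2 (slice U t) i j x)"
  using assms unfolding graphical_smcf_def by blast

lemma if0_mult: "(if P then y else 0) * (z::real) = (if P then y * z else 0)" by simp

lemma trace_g:
  fixes u :: "real^'n::finite \<Rightarrow> real^'m::finite"
  assumes sl: "spacelike_at u x"
  shows "(\<Sum>i\<in>UNIV. \<Sum>j\<in>UNIV. ginv u x $ i $ j * gmat u x $ i $ j) = real CARD('n)"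
proof -
  have "(\<Sum>j\<in>UNIV. ginv u x $ i $ j * gmat u x $ i $ j) = 1" for i :: 'n
    using ginv_sums(2)[OF sl, of i i] by (simp add: gmat_sym[of u x i])
  then show ?thesis by simp
qed

lemma quad_expand:
  fixes u :: "real^'n::finite \<Rightarrow> real^'m::finite" and \<beta> :: "real^'m" and c :: "'n \<Rightarrow> real"
  defines "\<xi> \<equiv> (\<chi> j. c j)"
  shows "quad (\<lambda>i j. gmat u x $ i $ j + \<beta> \<bullet> pd2 u i j x) c
    = \<xi> \<bullet> \<xi> - (\<Sum>j\<in>UNIV. (\<xi>$j) *\<^sub>R pd u j x) \<bullet> (\<Sum>j\<in>UNIV. (\<xi>$j) *\<^sub>R pd u j x)
      + \<beta> \<bullet> (\<Sum>j\<in>UNIV. (\<xi>$j) *\<^sub>R (\<Sum>i\<in>UNIV. (\<xi>$i) *\<^sub>R pd2 u i j x))"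
proof -
  have a: "\<xi> \<bullet> \<xi> = (\<Sum>i\<in>UNIV. \<Sum>j\<in>UNIV. c i * (if i = j then 1 else 0) * c j)"
    unfolding \<xi>_def by (simp add: inner_vec_def if01_mult if0_mult)
  have b: "(\<Sum>j\<in>UNIV. (\<xi>$j) *\<^sub>R pd u j x) \<bullet> (\<Sum>j\<in>UNIV. (\<xi>$j) *\<^sub>R pd u j x)
      = (\<Sum>i\<in>UNIV. \<Sum>j\<in>UNIV. c i * (pd u i x \<bullet> pd u j x) * c j)"
    unfolding \<xi>_def by (simp add: inner_sum_left inner_sum_right sum_distrib_left mult.commute mult.left_commute)
       (intro sum.cong refl, simp add: inner_commute)
  have c: "\<beta> \<bullet> (\<Sum>j\<in>UNIV. (\<xi>$j) *\<^sub>R (\<Sum>i\<in>UNIV. (\<xi>$i) *\<^sub>R pd2 u i j x))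
      = (\<Sum>i\<in>UNIV. \<Sum>j\<in>UNIV. c i * (\<beta> \<bullet> pd2 u i j x) * c j)"
    unfolding \<xi>_def
    by (simp add: inner_sum_right sum_distrib_left mult.commute mult.left_commute)
       (rule trans[OF _ sum.swap], intro sum.cong refl, simp add: mult.commute mult.left_commute)
  show ?thesis unfolding a b c quad_def gmat_def
    by (simp add: algebra_simps sum.distrib sum_subtractf)
qed

lemma spatial_min:
  fixes U :: "(real^'n::finite) \<times> real \<Rightarrow> real^'m::finite" and a x0 :: "real^'n" and b :: "real^'m"
  assumes flow: "graphical_smcf U u0" and t0: "t0 > 0"
    and mn: "\<And>x. (a - x0) \<bullet> (a - x0) - (b - U (x0, t0)) \<bullet> (b - U (x0, t0))
                \<le> (a - x) \<bullet> (a - x) - (b - U (x, t0)) \<bullet> (b - U (x, t0))"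
  shows "0 \<le> real CARD('n) + (b - U (x0, t0)) \<bullet> time_deriv U (x0, t0)"
proof -
  define u where "u = slice U t0"
  define \<beta> where "\<beta> = b - U (x0, t0)"
  define M where "M = (\<lambda>i j. gmat u x0 $ i $ j + \<beta> \<bullet> pd2 u i j x0)"
  have psdM: "0 \<le> quad M c" for c
  proof -
    define \<xi> where "\<xi> = (\<chi> j. c j)"
    have "0 \<le> 2 * (\<xi> \<bullet> \<xi>) - 2 * ((\<Sum>j\<in>UNIV. (\<xi>$j) *\<^sub>R pd u j x0) \<bullet> (\<Sum>j\<in>UNIV. (\<xi>$j) *\<^sub>R pd u j x0))
       + 2 * (\<beta> \<bullet> (\<Sum>j\<in>UNIV. (\<xi>$j) *\<^sub>R (\<Sum>i\<in>UNIV. (\<xi>$i) *\<^sub>R pd2 u i j x0)))"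
      using line_second[OF flow t0 mn, of \<xi>]
      unfolding u_def \<beta>_def pd2_flow[OF flow t0] pd_flow[OF flow t0] .
    then show ?thesis unfolding M_def quad_expand \<xi>_def[symmetric] by simp
  qed
  have sl: "spacelike_at u x0" unfolding u_def by (rule flow_spacelike[OF flow t0])
  have "0 \<le> (\<Sum>i\<in>UNIV. \<Sum>j\<in>UNIV. ginv u x0 $ i $ j * M i j)"
  proof (rule trace_psd)
    show "ginv u x0 $ i $ j = ginv u x0 $ j $ i" for i j by (rule ginv_sym[OF sl])
    show "0 \<le> quad (\<lambda>i j. ginv u x0 $ i $ j) x" for x
      unfolding quad_def by (rule ginv_psd[OF sl])
    show "0 \<le> quad M x" for x by (rule psdM)
  qed
  also have "\<dots> = (\<Sum>i\<in>UNIV. \<Sum>j\<in>UNIV. ginv u x0 $ i $ j * gmat u x0 $ i $ j)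
       + \<beta> \<bullet> (\<Sum>i\<in>UNIV. \<Sum>j\<in>UNIV. ginv u x0 $ i $ j *\<^sub>R pd2 u i j x0)"
    unfolding M_def by (simp add: distrib_left sum.distrib inner_sum_right)
  also have "\<dots> = real CARD('n) + (b - U (x0, t0)) \<bullet> time_deriv U (x0, t0)"
    using trace_g[OF sl] flow_eq[OF flow t0, of x0] unfolding u_def \<beta>_def by simp
  finally show ?thesis .
qed

lemma quad_add:
  fixes A :: "'n::finite \<Rightarrow> 'n \<Rightarrow> real"
  assumes sym: "\<And>i j. A i j = A j i"
  shows "quad A (\<lambda>l. x l + t * y l) = quad A x + 2 * t * (\<Sum>i\<in>UNIV. \<Sum>j\<in>UNIV. x i * A i j * y j) + t^2 * quad A y"
proof -
  have ex: "(x i + t * y i) * A i j * (x j + t * y j) = x i * A i j * x j + t * (x i * A i j * y j) + t * (y i * A i j * x j) + t^2 * (y i * A i j * y j)" for i j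
    by (simp add: algebra_simps power2_eq_square)
  have sw: "(\<Sum>i\<in>UNIV. \<Sum>j\<in>UNIV. y i * A i j * x j) = (\<Sum>i\<in>UNIV. \<Sum>j\<in>UNIV. x i * A i j * y j)"
    by (rule trans[OF sum.swap], intro sum.cong refl) (simp add: sym[of _ "_"] mult.commute mult.left_commute)
  show ?thesis unfolding quad_def ex
    by (simp add: sum.distrib sum_distrib_left[symmetric] sw)
qed

lemma psd_cs2:
  fixes A :: "'n::finite \<Rightarrow> 'n \<Rightarrow> real"
  assumes sym: "\<And>i j. A i j = A j i" and psd: "\<And>x. 0 \<le> quad A x"
  shows "(\<Sum>i\<in>UNIV. \<Sum>j\<in>UNIV. x i * A i j * y j)^2 \<le> quad A x * quad A y"
proof -
  define v where "v = (\<Sum>i\<in>UNIV. \<Sum>j\<in>UNIV. x i * A i j * y j)"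
  define a where "a = quad A y"
  have f: "0 \<le> quad A x + 2 * t * v + t^2 * a" for t
    using psd[of "\<lambda>l. x l + t * y l"] unfolding quad_add[OF sym] v_def a_def .
  show ?thesis
  proof (cases "a = 0")
    case True
    have "v = 0"
    proof (rule ccontr)
      assume "v \<noteq> 0"
      have "0 \<le> quad A x + 2 * (-(quad A x + 1) / (2 * v)) * v"
        using f[of "-(quad A x + 1) / (2 * v)"] True by simp
      also have "\<dots> = -1" using \<open>v \<noteq> 0\<close> by (simp add: field_simps)
      finally show False by simp
    qed
    then show ?thesis using True psd[of x] psd[of y] unfolding v_def a_def by simp
  next
    case False
    have ap: "0 < a" using False psd[of y] unfolding a_def by simp
    have "0 \<le> quad A x + 2 * (- v / a) * v + (- v / a)^2 * a" by (rule f)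
    also have "\<dots> = quad A x - v^2 / a" using ap by (simp add: field_simps power2_eq_square)
    finally have "v^2 / a \<le> quad A x" by simp
    then show ?thesis using ap unfolding v_def[symmetric] a_def[symmetric] by (simp add: field_simps mult.commute)
  qed
qed

lemma vsq_formula:
  fixes u :: "real^'n::finite \<Rightarrow> real^'m::finite"
  assumes sl: "spacelike_at u x"
  defines "q \<equiv> (\<lambda>A j. - (pd u j x $ A))"
  shows "vsq u x = real CARD('m) + (\<Sum>A\<in>UNIV. quad (\<lambda>i j. ginv u x $ i $ j) (q A))"
proof -
  have "nnorm2 (nproj u x (0, axis A 1)) = 1 + quad (\<lambda>i j. ginv u x $ i $ j) (q A)" for A
  proof -
    have qA: "qf (0, axis A 1) (tang u x j) = q A j" for j
      unfolding q_def by (simp add: qf_def tang_def inner_axis')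
    moreover have "sqn ((0::real^'n), (axis A 1::real^'m)) = -1" by (simp add: sqn_def qf_def)
    ultimately show ?thesis unfolding nproj_norm[OF sl] quad_def qA by simp
  qed
  then show ?thesis unfolding vsq_def by (simp add: sum.distrib)
qed

lemma grad_bound:
  fixes u :: "real^'n::finite \<Rightarrow> real^'m::finite"
  assumes sl: "spacelike_at u x" and vb: "vsq u x \<le> Cv"
  defines "C \<equiv> Cv - real CARD('m)"
  shows "0 \<le> C" and "(1 + C) * ((\<Sum>j\<in>UNIV. (\<xi>$j) *\<^sub>R pd u j x) \<bullet> (\<Sum>j\<in>UNIV. (\<xi>$j) *\<^sub>R pd u j x)) \<le> C * (\<xi> \<bullet> \<xi>)"
proof -
  define G where "G = (\<lambda>i j. ginv u x $ i $ j)"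
  define g where "g = (\<lambda>i j. gmat u x $ i $ j)"
  define q where "q = (\<lambda>A j. - (pd u j x $ A))"
  define D where "D = (\<Sum>j\<in>UNIV. (\<xi>$j) *\<^sub>R pd u j x)"
  have Gsym: "\<And>i j. G i j = G j i" unfolding G_def by (rule ginv_sym[OF sl])
  have Gpsd: "\<And>c. 0 \<le> quad G c" unfolding G_def quad_def by (rule ginv_psd[OF sl])
  have vs: "vsq u x = real CARD('m) + (\<Sum>A\<in>UNIV. quad G (q A))"
    unfolding G_def q_def by (rule vsq_formula[OF sl])
  have sumQ: "(\<Sum>A\<in>UNIV. quad G (q A)) \<le> C" using vs vb unfolding C_def by simp
  show C0: "0 \<le> C" using sumQ Gpsd by (meson order_trans sum_nonneg)
  define b where "b = (\<lambda>j. \<Sum>k\<in>UNIV. g j k * \<xi>$k)"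
  have Gb: "(\<Sum>j\<in>UNIV. G i j * b j) = \<xi>$i" for i
  proof -
    have "(\<Sum>j\<in>UNIV. G i j * b j) = (\<Sum>k\<in>UNIV. (\<Sum>j\<in>UNIV. G i j * g j k) * \<xi>$k)"
      unfolding b_def by (simp add: sum_distrib_left sum_distrib_right mult.assoc) (rule sum.swap)
    also have "\<dots> = (\<Sum>k\<in>UNIV. (if i = k then \<xi>$k else 0))"
      unfolding G_def g_def by (intro sum.cong refl) (simp add: ginv_sums(2)[OF sl])
    finally show ?thesis by simp
  qed
  have qgx: "quad G b = quad g (\<lambda>j. \<xi>$j)"
  proof -
    have "quad G b = (\<Sum>i\<in>UNIV. \<Sum>k\<in>UNIV. (\<Sum>j\<in>UNIV. G i j * b j) * g i k * (\<Sum>j\<in>UNIV. G k j * b j))"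
      unfolding quad_def G_def g_def by (rule ginv_quad[OF sl])
    then show ?thesis unfolding Gb quad_def by simp
  qed
  have quadg: "quad g (\<lambda>j. \<xi>$j) = \<xi> \<bullet> \<xi> - D \<bullet> D"
    using quad_expand[where \<beta> = "0::real^'m" and c = "\<lambda>j. \<xi>$j" and u = u and x = x] unfolding g_def D_def by simp
  have qg0: "0 \<le> quad g (\<lambda>j. \<xi>$j)" unfolding g_def quad_def by (rule g_psd[OF sl])
  have DA: "D $ A = - (\<Sum>i\<in>UNIV. \<Sum>j\<in>UNIV. q A i * G i j * b j)" for A
  proof -
    have "(\<Sum>i\<in>UNIV. \<Sum>j\<in>UNIV. q A i * G i j * b j) = (\<Sum>i\<in>UNIV. q A i * \<xi>$i)"
      by (simp add: mult.assoc sum_distrib_left[symmetric] Gb)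
    then show ?thesis unfolding D_def q_def by (simp add: sum_negf mult.commute)
  qed
  have "D \<bullet> D = (\<Sum>A\<in>UNIV. (D $ A)^2)" by (simp add: inner_vec_def power2_eq_square)
  also have "\<dots> \<le> (\<Sum>A\<in>UNIV. quad G (q A) * quad G b)"
    unfolding DA using psd_cs2[OF Gsym Gpsd] by (intro sum_mono) simp
  also have "\<dots> = (\<Sum>A\<in>UNIV. quad G (q A)) * quad g (\<lambda>j. \<xi>$j)"
    unfolding qgx by (simp add: sum_distrib_right)
  also have "\<dots> \<le> C * quad g (\<lambda>j. \<xi>$j)" using sumQ qg0 by (rule mult_right_mono)
  finally have "D \<bullet> D \<le> C * (\<xi> \<bullet> \<xi> - D \<bullet> D)" unfolding quadg .
  then show "(1 + C) * (D \<bullet> D) \<le> C * (\<xi> \<bullet> \<xi>)" by (simp add: algebra_simps)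
qed

lemma speed:
  fixes U :: "(real^'n::finite) \<times> real \<Rightarrow> real^'m::finite"
  assumes flow: "graphical_smcf U u0" and t: "t > 0"
  shows "time_deriv U (x, t) \<bullet> time_deriv U (x, t) \<le> nnorm2 (Hvec (slice U t) x)"
proof -
  have "(\<Sum>i\<in>UNIV. \<Sum>j\<in>UNIV. ginv (slice U t) x $ i $ j *\<^sub>R ((0::real^'n), pd2 (slice U t) i j x))
      = (0, \<Sum>i\<in>UNIV. \<Sum>j\<in>UNIV. ginv (slice U t) x $ i $ j *\<^sub>R pd2 (slice U t) i j x)"
    by (simp add: prod_eq_iff fst_sum snd_sum)
  then have "Hvec (slice U t) x = nproj (slice U t) x (0, time_deriv U (x, t))"
    unfolding Hvec_def flow_eq[OF flow t] by simp
  then show ?thesis using nproj_vertical[OF flow_spacelike[OF flow t]] by simp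
qed

lemma u0_lip:
  fixes u0 :: "real^'n::finite \<Rightarrow> real^'m::finite"
  assumes M0: "spacelike_entire_graph u0" and vb: "\<forall>x. vsq u0 x \<le> Cv"
  shows "\<exists>\<theta>. 0 \<le> \<theta> \<and> \<theta> < 1 \<and> (\<forall>x y. norm (u0 x - u0 y) \<le> \<theta> * norm (x - y))"
proof -
  define C where "C = Cv - real CARD('m)"
  have sl: "spacelike_at u0 x" for x using M0 unfolding spacelike_entire_graph_def by blast
  have C0: "0 \<le> C" unfolding C_def by (rule grad_bound(1)[OF sl[of 0] vb[rule_format]])
  define \<theta> where "\<theta> = sqrt (C / (1 + C))"
  have th0: "0 \<le> \<theta>" unfolding \<theta>_def using C0 by simp
  have th1: "\<theta> < 1" unfolding \<theta>_def using C0 by simp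
  have "C_k (Suc 0) UNIV u0" using M0 unfolding spacelike_entire_graph_def smooth_on_def by blast
  then have dif: "u0 differentiable (at x)" for x by simp
  have der: "(u0 has_derivative frechet_derivative u0 (at x)) (at x)" for x
    using dif frechet_derivative_works by blast
  have on: "onorm (frechet_derivative u0 (at x)) \<le> \<theta>" for x
  proof (rule onorm_le)
    fix \<xi> :: "real^'n"
    have l: "linear (frechet_derivative u0 (at x))"
      using has_derivative_bounded_linear[OF der] bounded_linear.linear by blast
    define D where "D = (\<Sum>j\<in>UNIV. (\<xi>$j) *\<^sub>R pd u0 j x)"
    have fD: "frechet_derivative u0 (at x) \<xi> = D"
      unfolding D_def pd_def by (rule lin_expand1[OF l])
    have "(1 + C) * (D \<bullet> D) \<le> C * (\<xi> \<bullet> \<xi>)"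
      unfolding D_def C_def by (rule grad_bound(2)[OF sl vb[rule_format]])
    then have "D \<bullet> D \<le> C / (1 + C) * (\<xi> \<bullet> \<xi>)" using C0 by (simp add: field_simps)
    then have "sqrt (D \<bullet> D) \<le> sqrt (C / (1 + C) * (\<xi> \<bullet> \<xi>))" by (rule real_sqrt_le_mono)
    then show "norm (frechet_derivative u0 (at x) \<xi>) \<le> \<theta> * norm \<xi>"
      unfolding fD \<theta>_def norm_eq_sqrt_inner[of D] norm_eq_sqrt_inner[of \<xi>] real_sqrt_mult .
  qed
  have "norm (u0 x - u0 y) \<le> \<theta> * norm (x - y)" for x y
    by (rule differentiable_bound[OF convex_UNIV _ _ UNIV_I UNIV_I, of u0 "\<lambda>x. frechet_derivative u0 (at x)"])
       (use der on in auto)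
  then show ?thesis using th0 th1 by blast
qed

lemma sqn_pair: "sqn ((a, b) - (x, y)) = (a - x) \<bullet> (a - x) - (b - y) \<bullet> (b - y)"
  by (simp add: sqn_def qf_def)

theorem corollary8p5:
  fixes u0 :: "real^'n::finite \<Rightarrow> real^'m::finite"
    and U :: "(real^'n) \<times> real \<Rightarrow> real^'m"
    and C_v C_H :: real
  assumes M0: "spacelike_entire_graph u0"
    and v_bd: "\<forall>x. vsq u0 x \<le> C_v"
    and H_bd: "\<exists>c < C_H. \<forall>x. nnorm2 (Hvec u0 x) \<le> c"
    and flow: "graphical_smcf U u0"
    and tame: "tame U C_H"
  shows "\<forall>(p::('n, 'm) pspace) (R::real). R > 0 \<longrightarrow> graph_at U 0 \<subseteq> qs_inside p R 0 \<longrightarrow>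
           (\<forall>t\<ge>0. graph_at U t \<subseteq> qs_inside p R t)"
proof (intro allI impI)
  fix p :: "('n, 'm) pspace" and R :: real
  assume R: "R > 0" and init: "graph_at U 0 \<subseteq> qs_inside p R 0"
  obtain a b where p: "p = (a, b)" by (cases p)
  define n where "n = real CARD('n)"
  define \<phi> where "\<phi> = (\<lambda>x t. (a - x) \<bullet> (a - x) - (b - U (x, t)) \<bullet> (b - U (x, t)) + 2 * n * t)"
  have U0: "U (x, 0) = u0 x" for x using flow unfolding graphical_smcf_def by blast
  have contU: "continuous_on (UNIV \<times> {0..}) U" using flow unfolding graphical_smcf_def by blast
  have init': "- R\<^sup>2 \<le> \<phi> x 0" for x
  proof -
    have "(x, U (x, 0)) \<in> qs_inside p R 0" using init unfolding graph_at_def by blast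
    then show ?thesis unfolding qs_inside_def p sqn_def qf_def \<phi>_def by simp
  qed
  have main: "- R\<^sup>2 \<le> \<phi> x1 t1" if t1: "0 \<le> t1" for x1 t1
  proof (rule ccontr)
    assume neg: "\<not> - R\<^sup>2 \<le> \<phi> x1 t1"
    have t1p: "0 < t1" using t1 neg init'[of x1] by (cases "t1 = 0") auto
    obtain \<theta> where th: "0 \<le> \<theta>" "\<theta> < 1" "\<And>x y. norm (u0 x - u0 y) \<le> \<theta> * norm (x - y)"
      using u0_lip[OF M0 v_bd] by blast
    obtain f where f: "continuous_on {0..} f" "\<And>t x. t \<ge> 0 \<Longrightarrow> nnorm2 (Hvec (slice U t) x) \<le> f t"
      using tame unfolding tame_def by blast
    obtain tm where tm: "\<forall>s\<in>{0..t1}. f s \<le> f tm"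
      using continuous_attains_sup[OF compact_Icc _ continuous_on_subset[OF f(1)], of 0 t1] t1 by auto
    define K where "K = sqrt (max (f tm) 0)"
    have K0: "0 \<le> K" unfolding K_def by simp
    have tdK: "norm (time_deriv U (x, s)) \<le> K" if "0 < s" "s \<le> t1" for x s
    proof -
      have a1: "time_deriv U (x, s) \<bullet> time_deriv U (x, s) \<le> nnorm2 (Hvec (slice U s) x)"
        by (rule speed[OF flow \<open>0 < s\<close>])
      have a2: "nnorm2 (Hvec (slice U s) x) \<le> f s" using f(2)[of s x] that by simp
      have a3: "f s \<le> f tm" using tm that by simp
      have "time_deriv U (x, s) \<bullet> time_deriv U (x, s) \<le> max (f tm) 0"
        using a1 a2 a3 by linarith
      then show ?thesis unfolding K_def norm_eq_sqrt_inner by (rule real_sqrt_le_mono)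
    qed
    have spd: "norm (U (x, t) - u0 x) \<le> K * t1" if "0 \<le> t" "t \<le> t1" for x t
    proof (cases "t = 0")
      case True then show ?thesis using U0 K0 t1 by simp
    next
      case False
      then have tp: "0 < t" using that by simp
      have cont: "continuous_on {0..t} (\<lambda>s. U (x, s))"
        by (rule continuous_on_compose2[OF contU]) (auto intro!: continuous_intros)
      obtain s where s: "s \<in> {0<..<t}" "norm (U (x, t) - U (x, 0)) \<le> norm ((t - 0) *\<^sub>R time_deriv U (x, s))"
      proof -
        have "\<And>s. 0 < s \<Longrightarrow> s < t \<Longrightarrow> ((\<lambda>s. U (x, s)) has_derivative (\<lambda>h. h *\<^sub>R time_deriv U (x, s))) (at s)"
          by (rule time_flow[OF flow])
        from mvt_general[OF tp cont this] show ?thesis using that by blast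
      qed
      have "norm ((t - 0) *\<^sub>R time_deriv U (x, s)) \<le> t * K"
        using tdK[of s x] s(1) that tp by (simp add: mult_left_mono)
      also have "\<dots> \<le> K * t1" using K0 that by (simp add: mult.commute mult_left_mono)
      finally show ?thesis using s(2) U0 by simp
    qed
    define c where "c = norm (b - u0 a) + K * t1"
    define \<rho> where "\<rho> = c / (1 - \<theta>)"
    have coer: "0 \<le> \<phi> x t" if "0 \<le> t" "t \<le> t1" "\<rho> \<le> norm (x - a)" for x t
    proof -
      define r where "r = norm (x - a)"
      have "norm (b - U (x, t)) = norm ((b - u0 a) + (u0 a - u0 x) + (u0 x - U (x, t)))" by simp
      also have "\<dots> \<le> norm ((b - u0 a) + (u0 a - u0 x)) + norm (u0 x - U (x, t))" by (rule norm_triangle_ineq)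
      also have "\<dots> \<le> norm (b - u0 a) + norm (u0 a - u0 x) + norm (u0 x - U (x, t))"
        using norm_triangle_ineq[of "b - u0 a" "u0 a - u0 x"] by simp
      also have "\<dots> \<le> norm (b - u0 a) + \<theta> * r + K * t1"
        using th(3)[of a x] spd[OF that(1,2), of x] unfolding r_def
        by (simp add: norm_minus_commute add_mono)
      also have "\<dots> \<le> r"
      proof -
        have "c \<le> (1 - \<theta>) * r" using that(3) th(2) unfolding \<rho>_def r_def by (simp add: field_simps)
        then show ?thesis unfolding c_def by (simp add: algebra_simps)
      qed
      finally have nb: "norm (b - U (x, t)) \<le> r" .
      have "(b - U (x, t)) \<bullet> (b - U (x, t)) \<le> (a - x) \<bullet> (a - x)"
      proof -
        have "norm (b - U (x, t))^2 \<le> r^2" using nb by (simp add: power_mono)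
        then show ?thesis unfolding r_def by (simp add: power2_norm_eq_inner[symmetric] norm_minus_commute)
      qed
      then show ?thesis unfolding \<phi>_def n_def using that(1) by simp
    qed
    define \<epsilon> where "\<epsilon> = (- R\<^sup>2 - \<phi> x1 t1) / (2 * t1)"
    have eps: "0 < \<epsilon>" unfolding \<epsilon>_def using neg t1p by simp
    define \<psi> where "\<psi> = (\<lambda>z. (a - fst z) \<bullet> (a - fst z) - (b - U z) \<bullet> (b - U z) + 2 * n * snd z + \<epsilon> * snd z)"
    have \<psi>\<phi>: "\<psi> (x, t) = \<phi> x t + \<epsilon> * t" for x t unfolding \<psi>_def \<phi>_def by simp
    define KS where "KS = cball a \<rho> \<times> {0..t1}"
    have x1K: "(x1, t1) \<in> KS"
    proof -
      have "norm (x1 - a) \<le> \<rho>"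
      proof (rule ccontr)
        assume "\<not> norm (x1 - a) \<le> \<rho>"
        then have "0 \<le> \<phi> x1 t1" using coer[OF t1 order_refl] by simp
        then show False using neg R by (smt (verit) zero_le_power2)
      qed
      then show ?thesis unfolding KS_def using t1 by (simp add: dist_norm norm_minus_commute)
    qed
    have cKS: "compact KS" unfolding KS_def by (intro compact_Times compact_cball compact_Icc)
    have contK: "continuous_on KS \<psi>"
    proof -
      have "continuous_on KS U" by (rule continuous_on_subset[OF contU]) (auto simp: KS_def)
      then show ?thesis unfolding \<psi>_def by (intro continuous_intros)
    qed
    obtain z0 where z0: "z0 \<in> KS" "\<And>z. z \<in> KS \<Longrightarrow> \<psi> z0 \<le> \<psi> z"
      using continuous_attains_inf[OF cKS _ contK] x1K by blast
    obtain x0 t0 where z0p: "z0 = (x0, t0)" by (cases z0)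
    have x0K: "norm (x0 - a) \<le> \<rho>" and t0r: "0 \<le> t0" "t0 \<le> t1"
      using z0(1) unfolding z0p KS_def by (auto simp: dist_norm norm_minus_commute)
    have low: "\<psi> (x0, t0) < - R\<^sup>2"
    proof -
      have "\<psi> (x0, t0) \<le> \<psi> (x1, t1)" using z0(2)[OF x1K] z0p by simp
      also have "\<dots> = \<phi> x1 t1 + (- R\<^sup>2 - \<phi> x1 t1) / 2" unfolding \<psi>\<phi> \<epsilon>_def using t1p by simp
      also have "\<dots> < - R\<^sup>2" using neg by (simp add: field_simps)
      finally show ?thesis .
    qed
    have t0p: "0 < t0"
    proof (rule ccontr)
      assume "\<not> 0 < t0"
      then have "t0 = 0" using t0r by simp
      then show False using low init'[of x0] unfolding \<psi>\<phi> by simp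
    qed
    have smin: "\<phi> x0 t0 \<le> \<phi> x t0" for x
    proof (cases "norm (x - a) \<le> \<rho>")
      case True
      then have "(x, t0) \<in> KS" unfolding KS_def using t0r by (simp add: dist_norm norm_minus_commute)
      then have "\<psi> (x0, t0) \<le> \<psi> (x, t0)" using z0(2) z0p by simp
      then show ?thesis unfolding \<psi>\<phi> by simp
    next
      case False
      then have "0 \<le> \<phi> x t0" using coer[OF t0r] by simp
      moreover have "\<phi> x0 t0 < 0" using low eps t0p unfolding \<psi>\<phi>
        by (smt (verit) mult_pos_pos zero_le_power2)
      ultimately show ?thesis by simp
    qed
    have sp: "0 \<le> n + (b - U (x0, t0)) \<bullet> time_deriv U (x0, t0)"
      unfolding n_def
      by (rule spatial_min[OF flow t0p]) (use smin in \<open>simp add: \<phi>_def\<close>)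
    define h where "h = (\<lambda>s. \<psi> (x0, s))"
    have hd: "(h has_real_derivative (2 * ((b - U (x0, t0)) \<bullet> time_deriv U (x0, t0)) + 2 * n + \<epsilon>)) (at t0)"
    proof -
      have f2: "((\<lambda>s. b - U (x0, s)) has_derivative (\<lambda>h. - (h *\<^sub>R time_deriv U (x0, t0)))) (at t0)"
        using has_derivative_diff[OF has_derivative_const[of b] time_flow[OF flow t0p, of x0]] by simp
      have "(h has_derivative (\<lambda>k. 0 - ((b - U (x0, t0)) \<bullet> (- (k *\<^sub>R time_deriv U (x0, t0)))
           + (- (k *\<^sub>R time_deriv U (x0, t0))) \<bullet> (b - U (x0, t0))) + 2 * n * k + \<epsilon> * k)) (at t0)"
        unfolding h_def \<psi>_def fst_conv snd_conv
        by (intro has_derivative_add has_derivative_diff has_derivative_inner f2 has_derivative_const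
            has_derivative_mult_right has_derivative_ident)
      then show ?thesis unfolding has_field_derivative_def
        by (rule has_derivative_eq_rhs) (simp add: fun_eq_iff inner_commute algebra_simps)
    qed
    have "2 * ((b - U (x0, t0)) \<bullet> time_deriv U (x0, t0)) + 2 * n + \<epsilon> \<le> 0"
    proof (rule first_order_left_min[OF hd t0p])
      fix s assume "t0 - t0 < s" "s \<le> t0"
      then have "(x0, s) \<in> KS" unfolding KS_def using x0K t0r by (simp add: dist_norm norm_minus_commute)
      then show "h t0 \<le> h s" unfolding h_def using z0(2) z0p by simp
    qed
    then show False using sp eps by simp
  qed
  fix t :: real assume t: "0 \<le> t"
  show "graph_at U t \<subseteq> qs_inside p R t"
  proof (rule subsetI)
    fix z assume z: "z \<in> graph_at U t"
    then obtain x where zx: "z = (x, U (x, t))" unfolding graph_at_def by blast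
    show "z \<in> qs_inside p R t"
      using main[OF t, of x] unfolding qs_inside_def zx p sqn_def qf_def \<phi>_def n_def by simp
  qed
qed

end
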